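(* Let $\Gamma=(\mathcal{V},\mathcal{H})$ be an oriented hypergraph. Up to changing the orientation of some hyperedges, $\Gamma$ is bipartite if and only if $\Gamma$ is vertex-bipartite.
   Context: An oriented hypergraph is a pair $\Gamma=(\mathcal{V},\mathcal{H})$ where $\mathcal{V}$ is a finite set of vertices and each hyperedge $h\in\mathcal{H}$ is a pair $(h_{in},h_{out})$ of disjoint nonempty subsets of $\mathcal{V}$ (inputs and outputs); standing assumption: no isolated vertices. Changing the orientation of $h$ replaces $(h_{in},h_{out})$ by $(h_{out},h_{in})$. $\Gamma$ is bipartite if $\mathcal{V}=\mathcal{V}_1\sqcup\mathcal{V}_2$ such that every hyperedge either has all its inputs in $\mathcal{V}_1$ and all its outputs in $\mathcal{V}_2$, or vice versa. $\Gamma$ is vertex-bipartite if $\mathcal{H}=\mathcal{H}_1\sqcup\mathcal{H}_2$ such that for every vertex $v$, either $v$ is an input only for hyperedges in $\mathcal{H}_1$ and an output only for hyperedges in $\mathcal{H}_2$, or $v$ is an input only for hyperedges in $\mathcal{H}_2$ and an output only for hyperedges in $\mathcal{H}_1$. *)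

theory Defs
  imports Main
begin

text \<open>Labels allow repeated hyperedges.\<close>

definition oriented_hypergraph ::
  "'v set \<Rightarrow> 'h set \<Rightarrow> ('h \<Rightarrow> 'v set) \<Rightarrow> ('h \<Rightarrow> 'v set) \<Rightarrow> bool" where
  "oriented_hypergraph V H inp outp \<longleftrightarrow>
     finite V \<and> finite H \<and>
     (\<forall>h\<in>H. inp h \<subseteq> V \<and> outp h \<subseteq> V \<and> inp h \<noteq> {} \<and> outp h \<noteq> {}
              \<and> inp h \<inter> outp h = {}) \<and>
     (\<forall>v\<in>V. \<exists>h\<in>H. v \<in> inp h \<or> v \<in> outp h)"

definition reorient_in :: "'h set \<Rightarrow> ('h \<Rightarrow> 'v set) \<Rightarrow> ('h \<Rightarrow> 'v set) \<Rightarrow> 'h \<Rightarrow> 'v set" where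
  "reorient_in S inp outp = (\<lambda>h. if h \<in> S then outp h else inp h)"

definition reorient_out :: "'h set \<Rightarrow> ('h \<Rightarrow> 'v set) \<Rightarrow> ('h \<Rightarrow> 'v set) \<Rightarrow> 'h \<Rightarrow> 'v set" where
  "reorient_out S inp outp = (\<lambda>h. if h \<in> S then inp h else outp h)"

definition hg_bipartite ::
  "'v set \<Rightarrow> 'h set \<Rightarrow> ('h \<Rightarrow> 'v set) \<Rightarrow> ('h \<Rightarrow> 'v set) \<Rightarrow> bool" where
  "hg_bipartite V H inp outp \<longleftrightarrow>
     (\<exists>V1 V2. V1 \<inter> V2 = {} \<and> V1 \<union> V2 = V \<and>
        (\<forall>h\<in>H. (inp h \<subseteq> V1 \<and> outp h \<subseteq> V2) \<or> (inp h \<subseteq> V2 \<and> outp h \<subseteq> V1)))"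

definition hg_vertex_bipartite ::
  "'v set \<Rightarrow> 'h set \<Rightarrow> ('h \<Rightarrow> 'v set) \<Rightarrow> ('h \<Rightarrow> 'v set) \<Rightarrow> bool" where
  "hg_vertex_bipartite V H inp outp \<longleftrightarrow>
     (\<exists>H1 H2. H1 \<inter> H2 = {} \<and> H1 \<union> H2 = H \<and>
        (\<forall>v\<in>V.
           ((\<forall>h\<in>H. v \<in> inp h \<longrightarrow> h \<in> H1) \<and> (\<forall>h\<in>H. v \<in> outp h \<longrightarrow> h \<in> H2)) \<or>
           ((\<forall>h\<in>H. v \<in> inp h \<longrightarrow> h \<in> H2) \<and> (\<forall>h\<in>H. v \<in> outp h \<longrightarrow> h \<in> H1))))"

end

theory Submission
  imports Defs
begin

lemma bip_reorient:
  "hg_bipartite V H (reorient_in S inp outp) (reorient_out S inp outp) \<longleftrightarrow> hg_bipartite V H inp outp"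
proof -
  have "\<And>V1 V2 h. ((if h \<in> S then outp h else inp h) \<subseteq> V1 \<and> (if h \<in> S then inp h else outp h) \<subseteq> V2 \<or>
      (if h \<in> S then outp h else inp h) \<subseteq> V2 \<and> (if h \<in> S then inp h else outp h) \<subseteq> V1)
    \<longleftrightarrow> (inp h \<subseteq> V1 \<and> outp h \<subseteq> V2 \<or> inp h \<subseteq> V2 \<and> outp h \<subseteq> V1)"
    by auto
  then show ?thesis unfolding hg_bipartite_def reorient_in_def reorient_out_def by simp
qed

theorem mainTheorem2:
  fixes V :: "'v set" and H :: "'h set" and inp outp :: "'h \<Rightarrow> 'v set"
  assumes "oriented_hypergraph V H inp outp"
  shows "(\<exists>S\<subseteq>H. hg_bipartite V H (reorient_in S inp outp) (reorient_out S inp outp))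
     \<longleftrightarrow> (\<exists>S\<subseteq>H. hg_vertex_bipartite V H (reorient_in S inp outp) (reorient_out S inp outp))"
proof
  have sub: "\<And>h. h \<in> H \<Longrightarrow> inp h \<subseteq> V \<and> outp h \<subseteq> V"
    using assms unfolding oriented_hypergraph_def by blast
  assume "\<exists>S\<subseteq>H. hg_bipartite V H (reorient_in S inp outp) (reorient_out S inp outp)"
  then have "hg_bipartite V H inp outp" using bip_reorient by blast
  then obtain V1 V2 where d: "V1 \<inter> V2 = {}" and u: "V1 \<union> V2 = V" and
    e: "\<forall>h\<in>H. (inp h \<subseteq> V1 \<and> outp h \<subseteq> V2) \<or> (inp h \<subseteq> V2 \<and> outp h \<subseteq> V1)"
    unfolding hg_bipartite_def by blast
  define T where "T = {h\<in>H. \<not>(inp h \<subseteq> V1 \<and> outp h \<subseteq> V2)}"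
  have io: "\<forall>h\<in>H. reorient_in T inp outp h \<subseteq> V1 \<and> reorient_out T inp outp h \<subseteq> V2"
    using e unfolding T_def reorient_in_def reorient_out_def by auto
  have "hg_vertex_bipartite V H (reorient_in T inp outp) (reorient_out T inp outp)"
    unfolding hg_vertex_bipartite_def
  proof (rule exI[of _ H], rule exI[of _ "{}"], intro conjI ballI)
    fix v assume "v \<in> V"
    show "((\<forall>h\<in>H. v \<in> reorient_in T inp outp h \<longrightarrow> h \<in> H) \<and>
          (\<forall>h\<in>H. v \<in> reorient_out T inp outp h \<longrightarrow> h \<in> {})) \<or>
         ((\<forall>h\<in>H. v \<in> reorient_in T inp outp h \<longrightarrow> h \<in> {}) \<and>
          (\<forall>h\<in>H. v \<in> reorient_out T inp outp h \<longrightarrow> h \<in> H))"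
    proof (cases "v \<in> V1")
      case True then show ?thesis using io d by blast
    next
      case False then show ?thesis using io by blast
    qed
  qed auto
  moreover have "T \<subseteq> H" unfolding T_def by auto
  ultimately show "\<exists>S\<subseteq>H. hg_vertex_bipartite V H (reorient_in S inp outp) (reorient_out S inp outp)"
    by blast
next
  have sub: "\<And>h. h \<in> H \<Longrightarrow> inp h \<subseteq> V \<and> outp h \<subseteq> V"
    using assms unfolding oriented_hypergraph_def by blast
  assume "\<exists>S\<subseteq>H. hg_vertex_bipartite V H (reorient_in S inp outp) (reorient_out S inp outp)"
  then obtain S where S: "S \<subseteq> H" and
    vb: "hg_vertex_bipartite V H (reorient_in S inp outp) (reorient_out S inp outp)" by blast
  define I where "I = reorient_in S inp outp"
  define Ou where "Ou = reorient_out S inp outp"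
  have subIO: "\<And>h. h \<in> H \<Longrightarrow> I h \<subseteq> V \<and> Ou h \<subseteq> V"
    using sub unfolding I_def Ou_def reorient_in_def reorient_out_def by auto
  obtain H1 H2 where d: "H1 \<inter> H2 = {}" and u: "H1 \<union> H2 = H" and
    c: "\<forall>v\<in>V. ((\<forall>h\<in>H. v \<in> I h \<longrightarrow> h \<in> H1) \<and> (\<forall>h\<in>H. v \<in> Ou h \<longrightarrow> h \<in> H2)) \<or>
           ((\<forall>h\<in>H. v \<in> I h \<longrightarrow> h \<in> H2) \<and> (\<forall>h\<in>H. v \<in> Ou h \<longrightarrow> h \<in> H1))"
    using vb unfolding hg_vertex_bipartite_def I_def Ou_def by blast
  define V1 where "V1 = {v\<in>V. (\<forall>h\<in>H. v \<in> I h \<longrightarrow> h \<in> H1) \<and> (\<forall>h\<in>H. v \<in> Ou h \<longrightarrow> h \<in> H2)}"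
  define V2 where "V2 = V - V1"
  have "\<forall>h\<in>H. (I h \<subseteq> V1 \<and> Ou h \<subseteq> V2) \<or> (I h \<subseteq> V2 \<and> Ou h \<subseteq> V1)"
  proof
    fix h assume h: "h \<in> H"
    show "(I h \<subseteq> V1 \<and> Ou h \<subseteq> V2) \<or> (I h \<subseteq> V2 \<and> Ou h \<subseteq> V1)"
    proof (cases "h \<in> H1")
      case True
      have "I h \<subseteq> V1"
      proof
        fix v assume v: "v \<in> I h"
        then have "v \<in> V" using subIO h by blast
        then show "v \<in> V1" using c v h True d unfolding V1_def by blast
      qed
      moreover have "Ou h \<subseteq> V2"
      proof
        fix v assume v: "v \<in> Ou h"
        then have "v \<in> V" using subIO h by blast
        then show "v \<in> V2" using c v h True d unfolding V1_def V2_def by blast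
      qed
      ultimately show ?thesis by blast
    next
      case False
      then have H2: "h \<in> H2" using u h by blast
      have "I h \<subseteq> V2"
      proof
        fix v assume v: "v \<in> I h"
        then have "v \<in> V" using subIO h by blast
        then show "v \<in> V2" using c v h H2 d unfolding V1_def V2_def by blast
      qed
      moreover have "Ou h \<subseteq> V1"
      proof
        fix v assume v: "v \<in> Ou h"
        then have "v \<in> V" using subIO h by blast
        then show "v \<in> V1" using c v h H2 d unfolding V1_def by blast
      qed
      ultimately show ?thesis by blast
    qed
  qed
  moreover have "V1 \<inter> V2 = {}" "V1 \<union> V2 = V" unfolding V1_def V2_def by auto
  ultimately have "hg_bipartite V H I Ou" unfolding hg_bipartite_def by blast
  then show "\<exists>S\<subseteq>H. hg_bipartite V H (reorient_in S inp outp) (reorient_out S inp outp)"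
    using S unfolding I_def Ou_def by blast
qed

end
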